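(* Assemblage maps are in bijection with $r$-straightenings, $r$-cyclic assemblage maps are in bijection with $r$-cyclic straightenings, and $r$-cyclic assemblage maps with duality are in bijection with $r$-cyclic straightenings with duality.
   Context: Let $r$ be a positive integer and consider the standard simplex $\triangle^{r-1}$ with vertex set $\{0,1,\dots,r-1\}$. The barycentric subdivision $\operatorname{sd}\partial\triangle^{r-1}$ of its boundary is the simplicial complex with one vertex for each non-empty proper subset (face) of $\{0,\dots,r-1\}$ and one $k$-face for each ascending chain $\tau_0\subset\tau_1\subset\dots\subset\tau_k$ of such faces; this face is written $(\bar\tau_0|\bar\tau_1|\dots|\bar\tau_k)$ with $\bar\tau_i=\tau_i\smallsetminus\tau_{i-1}$. Let $s_*$ be the chain map from the normalized chains of $\partial\triangle^{r-1}$ to the normalized chains of $\operatorname{sd}\partial\triangle^{r-1}$ given on an ordered generator $[a_0,\dots,a_{k-1}]$ by $s_*([a_0,\dots,a_{k-1}])=\sum_{\pi\in\Sigma_k}(-1)^{\operatorname{sign}(\pi)}(a_{\pi(0)}|a_{\pi(1)}|\dots|a_{\pi(k-1)})$. An assemblage map is a simplicial map $g\colon\operatorname{sd}\partial\triangle^{r-1}\to\partial\triangle^{r-1}$ such that $g_*\circ s_*$ is the identity. The cyclic group $\mathbb{C}_r=\langle\rho\rangle$ acts on $\{0,\dots,r-1\}$ by $i\mapsto i+1 \bmod r$ (forward action), hence on $\partial\triangle^{r-1}$ and $\operatorname{sd}\partial\triangle^{r-1}$; an $r$-cyclic assemblage map is an assemblage map that is $\mathbb{C}_r$-equivariant. Let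 $\Lambda$ be the endomorphism of $\operatorname{sd}\partial\triangle^{r-1}$ sending an ascending chain $\tau_0\subset\dots\subset\tau_{k-1}$ to $(-1)^{\binom{k}{2}}\,\tau_{k-1}^c\subset\dots\subset\tau_0^c$ (complements in $\{0,\dots,r-1\}$). An $r$-cyclic assemblage map with duality is an $r$-cyclic assemblage map $g$ such that the composition $\rho^{-1}\circ g\circ\Lambda\colon\operatorname{sd}\partial\triangle^{r-1}\to\partial\triangle^{r-1}$ is also an assemblage map. An $r$-straightening is a choice, for each non-empty proper subset $\tau$ of $\{0,1,\dots,r-1\}$, of an element $x_\tau\in\tau$; it is $r$-cyclic if it is equivariant with respect to the action of $\mathbb{C}_r$, and it is an $r$-cyclic straightening with duality if moreover the cyclic predecessor of $x_\tau$ is not an element of $\tau$. *)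

theory Defs
  imports "HOL-Combinatorics.Permutations" "HOL-Library.FuncSet"
begin

text \<open>Vertices of the simplex are 0..r-1. Faces of the boundary of the simplex
  (= vertices of its barycentric subdivision): non-empty proper subsets.\<close>
definition bfaces :: "nat \<Rightarrow> nat set set" where
  "bfaces r = {\<tau>. \<tau> \<subseteq> {..<r} \<and> \<tau> \<noteq> {} \<and> \<tau> \<noteq> {..<r}}"

text \<open>Simplices of the barycentric subdivision: non-empty strictly ascending
  chains of faces, written as lists.\<close>
definition sd_simplex :: "nat \<Rightarrow> nat set list \<Rightarrow> bool" where
  "sd_simplex r cs \<longleftrightarrow> cs \<noteq> [] \<and> set cs \<subseteq> bfaces r \<and> sorted_wrt (\<subset>) cs"

text \<open>Simplicial maps sd(boundary) -> boundary, given by their vertex maps.\<close>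
definition simplicial_map :: "nat \<Rightarrow> (nat set \<Rightarrow> nat) \<Rightarrow> bool" where
  "simplicial_map r g \<longleftrightarrow> g \<in> bfaces r \<rightarrow>\<^sub>E {..<r} \<and>
     (\<forall>cs. sd_simplex r cs \<longrightarrow> g ` set cs \<in> bfaces r)"

definition inv_sign :: "nat list \<Rightarrow> int" where
  "inv_sign ys = (-1) ^ card {(i, j). i < j \<and> j < length ys \<and> ys ! i > ys ! j}"

text \<open>The normalized chain [y_0,...,y_{k-1}] of the boundary of the simplex, written as
  its coefficient function on the basis of (increasingly oriented) simplices:
  it is zero if a vertex repeats, and [y_pi] = sign(pi) [y] otherwise.\<close>
definition orient :: "nat list \<Rightarrow> nat set \<Rightarrow> int" where
  "orient ys \<sigma> = (if distinct ys \<and> set ys = \<sigma> then inv_sign ys else 0)"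

text \<open>The face (a_{p 0} | ... | a_{p (k-1)}) of sd as an ascending chain of faces.\<close>
definition chain_of :: "nat list \<Rightarrow> (nat \<Rightarrow> nat) \<Rightarrow> nat set list" where
  "chain_of as p = map (\<lambda>i. set (map (\<lambda>j. as ! p j) [0..<Suc i])) [0..<length as]"

text \<open>A chain map F from normalized chains of sd to normalized chains of the boundary,
  specified on generators (ascending chains) as sign times ordered simplex;
  (F o s_*) applied to the generator [a_0,...,a_{k-1}].\<close>
definition comp_s :: "(nat set list \<Rightarrow> int \<times> nat list) \<Rightarrow> nat list \<Rightarrow> nat set \<Rightarrow> int" where
  "comp_s F as \<sigma> = (\<Sum>p | p permutes {..<length as}.
      sign p * fst (F (chain_of as p)) * orient (snd (F (chain_of as p))) \<sigma>)"

definition splits :: "nat \<Rightarrow> (nat set list \<Rightarrow> int \<times> nat list) \<Rightarrow> bool" where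
  "splits r F \<longleftrightarrow> (\<forall>as. as \<noteq> [] \<and> distinct as \<and> set as \<in> bfaces r \<longrightarrow> comp_s F as = orient as)"

definition induced :: "(nat set \<Rightarrow> nat) \<Rightarrow> nat set list \<Rightarrow> int \<times> nat list" where
  "induced g cs = (1, map g cs)"

definition assemblage :: "nat \<Rightarrow> (nat set \<Rightarrow> nat) \<Rightarrow> bool" where
  "assemblage r g \<longleftrightarrow> simplicial_map r g \<and> splits r (induced g)"

definition rot :: "nat \<Rightarrow> nat \<Rightarrow> nat" where "rot r i = (i + 1) mod r"
definition rotinv :: "nat \<Rightarrow> nat \<Rightarrow> nat" where "rotinv r i = (i + r - 1) mod r"

definition cyclic_assemblage :: "nat \<Rightarrow> (nat set \<Rightarrow> nat) \<Rightarrow> bool" where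
  "cyclic_assemblage r g \<longleftrightarrow> assemblage r g \<and>
     (\<forall>\<tau>\<in>bfaces r. g (rot r ` \<tau>) = rot r (g \<tau>))"

text \<open>The composite rho^{-1} o g o Lambda: on vertices tau |-> rho^{-1}(g(tau^c));
  on chain generators the sign (-1)^(k choose 2) and the reversed complemented chain.\<close>
definition dual_vertex_map :: "nat \<Rightarrow> (nat set \<Rightarrow> nat) \<Rightarrow> nat set \<Rightarrow> nat" where
  "dual_vertex_map r g = (\<lambda>\<tau>\<in>bfaces r. rotinv r (g ({..<r} - \<tau>)))"

definition dual_chain_map :: "nat \<Rightarrow> (nat set \<Rightarrow> nat) \<Rightarrow> nat set list \<Rightarrow> int \<times> nat list" where
  "dual_chain_map r g cs = ((-1) ^ (length cs choose 2),
      map (rotinv r \<circ> g) (rev (map (\<lambda>\<tau>. {..<r} - \<tau>) cs)))"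

definition cyclic_assemblage_duality :: "nat \<Rightarrow> (nat set \<Rightarrow> nat) \<Rightarrow> bool" where
  "cyclic_assemblage_duality r g \<longleftrightarrow> cyclic_assemblage r g \<and>
     simplicial_map r (dual_vertex_map r g) \<and> splits r (dual_chain_map r g)"

definition straightening :: "nat \<Rightarrow> (nat set \<Rightarrow> nat) \<Rightarrow> bool" where
  "straightening r x \<longleftrightarrow> x \<in> (\<Pi>\<^sub>E \<tau>\<in>bfaces r. \<tau>)"

definition cyclic_straightening :: "nat \<Rightarrow> (nat set \<Rightarrow> nat) \<Rightarrow> bool" where
  "cyclic_straightening r x \<longleftrightarrow> straightening r x \<and>
     (\<forall>\<tau>\<in>bfaces r. x (rot r ` \<tau>) = rot r (x \<tau>))"

definition cyclic_straightening_duality :: "nat \<Rightarrow> (nat set \<Rightarrow> nat) \<Rightarrow> bool" where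
  "cyclic_straightening_duality r x \<longleftrightarrow> cyclic_straightening r x \<and>
     (\<forall>\<tau>\<in>bfaces r. rotinv r (x \<tau>) \<notin> \<tau>)"

end

theory Submission imports Defs "HOL-Library.Multiset" begin

definition invs :: "nat list \<Rightarrow> (nat \<times> nat) set" where
  "invs ys = {(i, j). i < j \<and> j < length ys \<and> ys ! i > ys ! j}"

lemma inv_sign_invs: "inv_sign ys = (-1) ^ card (invs ys)"
  by (simp add: inv_sign_def invs_def)

lemma finite_invs: "finite (invs ys)"
proof -
  have "invs ys \<subseteq> {..<length ys} \<times> {..<length ys}" by (auto simp: invs_def)
  thus ?thesis by (rule finite_subset) auto
qed

lemma adj_map_invs:
  assumes "Suc i < length zs"
  shows "map_prod (Transposition.transpose i (Suc i)) (Transposition.transpose i (Suc i)) ` (invs zs - {(i, Suc i)})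
     \<subseteq> invs (permute_list (Transposition.transpose i (Suc i)) zs) - {(i, Suc i)}"
proof
  let ?t = "Transposition.transpose i (Suc i)"
  have tp: "?t permutes {..<length zs}" using assms by (intro permutes_swap_id) auto
  fix x assume "x \<in> map_prod ?t ?t ` (invs zs - {(i, Suc i)})"
  then obtain a b where x: "x = (?t a, ?t b)" and ab: "a < b" "b < length zs" "zs ! a > zs ! b" "(a, b) \<noteq> (i, Suc i)"
    by (auto simp: invs_def)
  have lt: "?t a < ?t b" using ab by (auto simp: Transposition.transpose_def)
  have bl: "?t b < length zs" using ab assms by (auto simp: Transposition.transpose_def)
  have al: "?t a < length zs" using lt bl by simp
  have "permute_list ?t zs ! ?t a = zs ! a" using permute_list_nth[OF tp al] by simp
  moreover have "permute_list ?t zs ! ?t b = zs ! b" using permute_list_nth[OF tp bl] by simp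
  moreover have "(?t a, ?t b) \<noteq> (i, Suc i)" using ab by (auto simp: Transposition.transpose_def split: if_splits)
  ultimately show "x \<in> invs (permute_list ?t zs) - {(i, Suc i)}"
    using x lt bl ab by (auto simp: invs_def)
qed

lemma adj_card_le:
  assumes "Suc i < length zs"
  shows "card (invs zs - {(i, Suc i)}) \<le> card (invs (permute_list (Transposition.transpose i (Suc i)) zs) - {(i, Suc i)})"
proof -
  let ?t = "Transposition.transpose i (Suc i)"
  have "inj (map_prod ?t ?t)" by (intro prod.inj_map inj_transpose)
  then show ?thesis
    by (intro card_inj_on_le[OF _ adj_map_invs[OF assms]]) (auto simp: finite_invs intro: inj_on_subset)
qed

lemma adj_swap:
  assumes "distinct ys" "Suc i < length ys"
  shows "inv_sign (permute_list (Transposition.transpose i (Suc i)) ys) = - inv_sign ys"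
proof -
  let ?t = "Transposition.transpose i (Suc i)"
  let ?ys = "permute_list ?t ys"
  let ?P = "(i, Suc i)"
  have tp: "?t permutes {..<length ys}" using assms by (intro permutes_swap_id) auto
  have bk: "permute_list ?t ?ys = ys"
    using permute_list_compose[OF tp, of ?t, symmetric] by simp
  have c1: "card (invs ys - {?P}) \<le> card (invs ?ys - {?P})" using adj_card_le assms(2) by blast
  have c2: "card (invs ?ys - {?P}) \<le> card (invs ys - {?P})"
    using adj_card_le[of i ?ys] assms(2) bk by simp
  have eq: "card (invs ?ys - {?P}) = card (invs ys - {?P})" using c1 c2 by simp
  have n1: "?ys ! i = ys ! Suc i" using permute_list_nth[OF tp] assms(2) by simp
  have n2: "?ys ! Suc i = ys ! i" using permute_list_nth[OF tp] assms(2) by simp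
  have ne: "ys ! i \<noteq> ys ! Suc i" using assms by (simp add: nth_eq_iff_index_eq)
  have m1: "?P \<in> invs ys \<longleftrightarrow> ys ! i > ys ! Suc i" using assms(2) by (simp add: invs_def)
  have m2: "?P \<in> invs ?ys \<longleftrightarrow> ys ! Suc i > ys ! i" using assms(2) n1 n2 by (simp add: invs_def)
  show ?thesis
  proof (cases "ys ! i > ys ! Suc i")
    case True
    then have i1: "?P \<in> invs ys" "?P \<notin> invs ?ys" using m1 m2 by auto
    have "card (invs ys) = Suc (card (invs ys - {?P}))" using card.remove[OF finite_invs i1(1)] .
    moreover have "invs ?ys - {?P} = invs ?ys" using i1(2) by blast
    ultimately
    show ?thesis using eq by (simp add: inv_sign_invs)
  next
    case False
    then have "ys ! Suc i > ys ! i" using ne by simp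
    then have i1: "?P \<in> invs ?ys" "?P \<notin> invs ys" using m1 m2 by auto
    have "card (invs ?ys) = Suc (card (invs ?ys - {?P}))" using card.remove[OF finite_invs i1(1)] .
    moreover have "invs ys - {?P} = invs ys" using i1(2) by blast
    ultimately
    show ?thesis using eq by (simp add: inv_sign_invs)
  qed
qed

definition Qp :: "nat \<Rightarrow> (nat \<Rightarrow> nat) \<Rightarrow> bool" where
  "Qp k p \<longleftrightarrow> (\<forall>ys. distinct ys \<and> length ys = k \<longrightarrow> inv_sign (permute_list p ys) = sign p * inv_sign ys)"

lemma Qp_comp:
  assumes "p permutes {..<k}" "q permutes {..<k}" "Qp k p" "Qp k q"
  shows "Qp k (p \<circ> q)"
  unfolding Qp_def
proof (intro allI impI)
  fix ys :: "nat list" assume ys: "distinct ys \<and> length ys = k"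
  have "permute_list (p \<circ> q) ys = permute_list q (permute_list p ys)"
    using ys assms(2) by (intro permute_list_compose) simp
  moreover have "inv_sign (permute_list q (permute_list p ys)) = sign q * inv_sign (permute_list p ys)"
    using assms(4) ys assms(1) by (simp add: Qp_def distinct_permute_list)
  moreover have "inv_sign (permute_list p ys) = sign p * inv_sign ys" using assms(3) ys by (simp add: Qp_def)
  moreover have "sign (p \<circ> q) = sign p * sign q"
    using assms by (intro sign_compose) (auto intro: permutes_imp_permutation)
  ultimately show "inv_sign (permute_list (p \<circ> q) ys) = sign (p \<circ> q) * inv_sign ys" by simp
qed

lemma Qp_id: "Qp k id" by (simp add: Qp_def)

lemma Qp_adj: "Suc i < k \<Longrightarrow> Qp k (Transposition.transpose i (Suc i))"
  by (simp add: Qp_def adj_swap sign_swap_id)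

lemma Qp_adjs: "\<forall>x\<in>set xs. Suc x < k \<Longrightarrow> Qp k (apply_adj_transps xs) \<and> apply_adj_transps xs permutes {..<k}"
proof (induction xs)
  case Nil then show ?case using Qp_id[of k] permutes_id[of "{..<k}"] by (simp add: id_def)
next
  case (Cons x xs)
  have tp: "Transposition.transpose x (Suc x) permutes {..<k}" using Cons.prems by (intro permutes_swap_id) auto
  have q1: "Qp k (Transposition.transpose x (Suc x) \<circ> apply_adj_transps xs)"
    using Cons tp Qp_adj[of x k] by (intro Qp_comp) auto
  have q2: "Transposition.transpose x (Suc x) \<circ> apply_adj_transps xs permutes {..<k}"
    using Cons tp by (intro permutes_compose) auto
  show ?case using q1 q2 by (simp only: apply_adj_transps_Cons Suc_eq_plus1[symmetric])
qed

lemma Qp_transp: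
  assumes "a < k" "b < k"
  shows "Qp k (Transposition.transpose a b)"
proof -
  have lt: "Qp k (Transposition.transpose a b)" if "a < b" "b < k" for a b
  proof -
    have "\<forall>x\<in>set (adj_transp_seq a b). Suc x < k" using that set_adj_transp_seq[of a b] by auto
    then show ?thesis using Qp_adjs adj_transp_seq_correct[OF that(1)] by metis
  qed
  show ?thesis
  proof (cases a b rule: linorder_cases)
    case less then show ?thesis using lt assms by blast
  next
    case equal then show ?thesis by (simp add: Qp_id)
  next
    case greater then show ?thesis using lt[of b a] assms by (simp add: transpose_commute)
  qed
qed

lemma Qp_all: assumes "p permutes {..<k}" shows "Qp k p"
  using assms finite_lessThan[of k]
proof (induction rule: permutes_induct)
  case id then show ?case by (rule Qp_id)
next
  case (swap a b p)
  then show ?case by (intro Qp_comp Qp_transp permutes_swap_id) auto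
qed

lemma inv_sign_permute:
  "p permutes {..<length ys} \<Longrightarrow> distinct ys \<Longrightarrow> inv_sign (permute_list p ys) = sign p * inv_sign ys"
  using Qp_all[of p "length ys"] by (simp add: Qp_def)


definition rho :: "nat \<Rightarrow> nat \<Rightarrow> nat" where
  "rho n i = (if i < n then n - 1 - i else i)"

lemma rho_permutes: "rho n permutes {..<n}"
  by (rule inj_imp_permutes) (auto simp: inj_on_def rho_def)

lemma permute_rho: "permute_list (rho (length ys)) ys = rev ys"
  by (rule nth_equalityI) (auto simp: permute_list_def rho_def rev_nth)

lemma card_pairs: "card {(i, j). i < j \<and> j < (n::nat)} = n choose 2"
proof (induction n)
  case 0 then show ?case by simp
next
  case (Suc n)
  have eq: "{(i, j). i < j \<and> j < Suc n} = {(i, j). i < j \<and> j < n} \<union> (\<lambda>i. (i, n)) ` {..<n}"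
    by auto
  have fin: "finite {(i, j). i < j \<and> j < (n::nat)}"
    by (rule finite_subset[of _ "{..<n} \<times> {..<n}"]) auto
  have "card ({(i, j). i < j \<and> j < n} \<union> (\<lambda>i. (i, n)) ` {..<n}) =
        card {(i, j). i < j \<and> j < (n::nat)} + card ((\<lambda>i. (i, n)) ` {..<n})"
    by (rule card_Un_disjoint) (use fin in auto)
  also have "card ((\<lambda>i. (i, n)) ` {..<n}) = n" by (subst card_image) (auto simp: inj_on_def)
  finally show ?case using Suc eq by (simp add: numeral_2_eq_2)
qed

lemma invs_upt: "invs [0..<n] = {}"
  by (auto simp: invs_def)

lemma invs_rev_upt: "invs (rev [0..<n]) = {(i, j). i < j \<and> j < n}"
  by (auto simp: invs_def rev_nth)

lemma sign_rho: "sign (rho n) = (-1) ^ (n choose 2)"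
proof -
  have "inv_sign (permute_list (rho n) [0..<n]) = sign (rho n) * inv_sign [0..<n]"
    using inv_sign_permute[of "rho n" "[0..<n]"] rho_permutes by simp
  moreover have "permute_list (rho n) [0..<n] = rev [0..<n]" using permute_rho[of "[0..<n]"] by simp
  ultimately show ?thesis by (simp add: inv_sign_invs invs_upt invs_rev_upt card_pairs)
qed

lemma inv_sign_rev: "distinct ys \<Longrightarrow> inv_sign (rev ys) = (-1) ^ (length ys choose 2) * inv_sign ys"
  by (simp add: permute_rho[symmetric] inv_sign_permute rho_permutes sign_rho)

lemma orient_rev: "orient (rev ys) \<sigma> = (-1) ^ (length ys choose 2) * orient ys \<sigma>"
  by (simp add: orient_def inv_sign_rev)

definition pchain :: "nat list \<Rightarrow> nat set list" where
  "pchain ys = map (\<lambda>i. set (take (Suc i) ys)) [0..<length ys]"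

lemma chain_pchain:
  assumes "p permutes {..<length as}"
  shows "chain_of as p = pchain (permute_list p as)"
  unfolding chain_of_def pchain_def permute_list_def
  by (auto simp: take_map min_def intro!: map_cong)

lemma pchain_snoc: "pchain (ys @ [y]) = pchain ys @ [insert y (set ys)]"
  unfolding pchain_def by (auto simp: take_append intro!: map_cong)

lemma pchain_elems: "\<tau> \<in> set (pchain ys) \<Longrightarrow> \<tau> \<subseteq> set ys \<and> \<tau> \<noteq> {}"
  unfolding pchain_def using set_take_subset by (fastforce simp: take_Suc_conv_app_nth)

lemma pchain_last: "ys \<noteq> [] \<Longrightarrow> set ys \<in> set (pchain ys)"
  unfolding pchain_def
  by (auto intro!: image_eqI[where x="length ys - 1"])

lemma length_pchain [simp]: "length (pchain ys) = length ys"
  by (simp add: pchain_def)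

lemma claim1:
  "(\<forall>\<tau>\<in>set (pchain ys). h \<tau> \<in> \<tau>) \<Longrightarrow> distinct ys \<Longrightarrow> distinct (map h (pchain ys))
   \<Longrightarrow> map h (pchain ys) = ys"
proof (induction ys rule: rev_induct)
  case Nil then show ?case by (simp add: pchain_def)
next
  case (snoc y ys)
  have IH: "map h (pchain ys) = ys" using snoc by (simp add: pchain_snoc)
  have "h (insert y (set ys)) \<in> insert y (set ys)" using snoc.prems(1) by (simp add: pchain_snoc)
  moreover have "h (insert y (set ys)) \<notin> set ys"
    using snoc.prems(3) IH by (simp add: pchain_snoc)
  ultimately show ?case using IH by (simp add: pchain_snoc)
qed

lemma good_snoc: "map h (pchain (ys @ [y])) = ys @ [y] \<Longrightarrow> map h (pchain ys) = ys \<and> h (insert y (set ys)) = y"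
  by (simp add: pchain_snoc)

lemma claim2:
  "map h (pchain ys) = ys \<Longrightarrow> map h (pchain zs) = zs \<Longrightarrow> distinct ys \<Longrightarrow> distinct zs
   \<Longrightarrow> set ys = set zs \<Longrightarrow> ys = zs"
proof (induction ys arbitrary: zs rule: rev_induct)
  case Nil then show ?case by simp
next
  case (snoc y ys)
  then have "zs \<noteq> []" by auto
  then obtain zs' z where zs: "zs = zs' @ [z]" by (cases zs rule: rev_exhaust) auto
  have g1: "map h (pchain ys) = ys" "h (insert y (set ys)) = y" using good_snoc[OF snoc.prems(1)] by auto
  have g2: "map h (pchain zs') = zs'" "h (insert z (set zs')) = z" using good_snoc snoc.prems(2) zs by auto
  have "insert y (set ys) = insert z (set zs')" using snoc.prems(5) zs by simp
  then have yz: "y = z" using g1 g2 by metis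
  have nys: "y \<notin> set ys" using snoc.prems(3) by simp
  have nzs: "y \<notin> set zs'" using snoc.prems(4) zs yz by simp
  have ins: "insert y (set ys) = insert y (set zs')" using snoc.prems(5) zs yz by simp
  have "set ys = set zs'" using Diff_insert_absorb[OF nys] Diff_insert_absorb[OF nzs] ins by metis
  then have "ys = zs'" using snoc.IH[OF g1(1) g2(1)] snoc.prems(3,4) zs by simp
  then show ?case using zs yz by simp
qed

lemma exist_good:
  assumes "finite S"
  shows "(\<forall>T. T \<subseteq> S \<and> T \<noteq> {} \<longrightarrow> h T \<in> T) \<longrightarrow> (\<exists>ys. distinct ys \<and> set ys = S \<and> map h (pchain ys) = ys)"
  using assms
proof (induction rule: finite_psubset_induct)
  case (psubset S)
  show ?case
  proof (intro impI)
    assume H: "\<forall>T. T \<subseteq> S \<and> T \<noteq> {} \<longrightarrow> h T \<in> T"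
    show "\<exists>ys. distinct ys \<and> set ys = S \<and> map h (pchain ys) = ys"
    proof (cases "S = {}")
      case True then show ?thesis by (intro exI[of _ "[]"]) (simp add: pchain_def)
    next
      case False
      then have yS: "h S \<in> S" using H by blast
      have sub: "S - {h S} \<subset> S" using yS by blast
      have H2: "\<forall>T. T \<subseteq> S - {h S} \<and> T \<noteq> {} \<longrightarrow> h T \<in> T" using H by blast
      obtain ys where ys: "distinct ys" "set ys = S - {h S}" "map h (pchain ys) = ys"
        using mp[OF psubset.IH[OF sub] H2] by blast
      have ins: "insert (h S) (set ys) = S" using ys(2) yS by blast
      have "distinct (ys @ [h S])" using ys(1,2) by simp
      moreover have "set (ys @ [h S]) = S" using ins by simp
      moreover have "map h (pchain (ys @ [h S])) = ys @ [h S]" using ys(3) ins by (simp add: pchain_snoc)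
      ultimately show ?thesis by blast
    qed
  qed
qed

lemma permute_list_inj:
  assumes "p permutes {..<length as}" "q permutes {..<length as}" "distinct as"
    "permute_list p as = permute_list q as"
  shows "p = q"
proof
  fix i
  show "p i = q i"
  proof (cases "i < length as")
    case True
    have "as ! p i = as ! q i"
      using permute_list_nth[OF assms(1) True] permute_list_nth[OF assms(2) True] assms(4) by simp
    moreover have "p i < length as" "q i < length as"
      using permutes_in_image[OF assms(1)] permutes_in_image[OF assms(2)] True by auto
    ultimately show ?thesis using assms(3) by (simp add: nth_eq_iff_index_eq)
  next
    case False
    then show ?thesis using permutes_not_in[OF assms(1)] permutes_not_in[OF assms(2)] by simp
  qed
qed

lemma sub_bfaces: "S \<in> bfaces r \<Longrightarrow> T \<subseteq> S \<Longrightarrow> T \<noteq> {} \<Longrightarrow> T \<in> bfaces r"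
  by (auto simp: bfaces_def)

lemma lemmaA:
  assumes h: "\<forall>\<tau>\<in>bfaces r. h \<tau> \<in> \<tau>"
    and as: "as \<noteq> []" "distinct as" "set as \<in> bfaces r"
  shows "(\<Sum>p | p permutes {..<length as}. sign p * orient (map h (chain_of as p)) \<sigma>) = orient as \<sigma>"
proof -
  let ?P = "{p. p permutes {..<length as}}"
  let ?S = "set as"
  have hS: "\<forall>T. T \<subseteq> ?S \<and> T \<noteq> {} \<longrightarrow> h T \<in> T" using h sub_bfaces[OF as(3)] by blast
  obtain ys0 where ys0: "distinct ys0" "set ys0 = ?S" "map h (pchain ys0) = ys0"
    using exist_good[of ?S h] hS by auto
  have "mset ys0 = mset as" using ys0 as(2) set_eq_iff_mset_eq_distinct by blast
  then obtain p0 where p0: "p0 permutes {..<length as}" "permute_list p0 as = ys0"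
    using mset_eq_permutation by blast
  have zero: "sign p * orient (map h (chain_of as p)) \<sigma> = 0" if "p \<in> ?P - {p0}" for p
  proof (rule ccontr)
    assume nz: "sign p * orient (map h (chain_of as p)) \<sigma> \<noteq> 0"
    have pp: "p permutes {..<length as}" "p \<noteq> p0" using that by auto
    let ?ys = "permute_list p as"
    have ch: "chain_of as p = pchain ?ys" using chain_pchain[OF pp(1)] .
    have dys: "distinct ?ys" "set ?ys = ?S" using pp(1) as(2) by (auto simp: distinct_permute_list set_permute_list)
    have "distinct (map h (pchain ?ys))" using nz ch by (auto simp: orient_def split: if_splits)
    moreover have "\<forall>\<tau>\<in>set (pchain ?ys). h \<tau> \<in> \<tau>" using hS pchain_elems dys(2) by blast
    ultimately have "map h (pchain ?ys) = ?ys" using claim1 dys(1) by blast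
    then have "?ys = ys0" using claim2[of h ?ys ys0] ys0 dys by simp
    then have "p = p0" using permute_list_inj[OF pp(1) p0(1) as(2)] p0(2) by simp
    then show False using pp(2) by simp
  qed
  have fin: "finite ?P" using finite_permutations[of "{..<length as}"] by simp
  have "(\<Sum>p\<in>?P. sign p * orient (map h (chain_of as p)) \<sigma>)
      = sign p0 * orient (map h (chain_of as p0)) \<sigma> + (\<Sum>p\<in>?P - {p0}. sign p * orient (map h (chain_of as p)) \<sigma>)"
    using p0(1) fin by (subst sum.remove) auto
  also have "(\<Sum>p\<in>?P - {p0}. sign p * orient (map h (chain_of as p)) \<sigma>) = 0"
    using zero by (intro sum.neutral) blast
  also have "map h (chain_of as p0) = ys0" using chain_pchain[OF p0(1)] p0(2) ys0(3) by simp
  also have "sign p0 * orient ys0 \<sigma> = orient as \<sigma>"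
  proof -
    have "inv_sign ys0 = sign p0 * inv_sign as" using inv_sign_permute[OF p0(1) as(2)] p0(2) by simp
    then show ?thesis using ys0 as(2) by (simp add: orient_def mult.assoc[symmetric])
  qed
  finally show ?thesis by simp
qed

lemma lemmaB:
  assumes H: "\<forall>as. as \<noteq> [] \<and> distinct as \<and> set as \<in> bfaces r \<longrightarrow>
     (\<forall>\<sigma>. (\<Sum>p | p permutes {..<length as}. sign p * orient (map h (chain_of as p)) \<sigma>) = orient as \<sigma>)"
    and \<tau>: "\<tau> \<in> bfaces r"
  shows "h \<tau> \<in> \<tau>"
proof -
  have fin: "finite \<tau>" using \<tau> by (auto simp: bfaces_def intro: finite_subset)
  define as where "as = sorted_list_of_set \<tau>"
  have as: "distinct as" "set as = \<tau>" "as \<noteq> []" using fin \<tau> by (auto simp: as_def bfaces_def)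
  have "orient as \<tau> \<noteq> 0" using as by (simp add: orient_def inv_sign_def)
  then have "(\<Sum>p | p permutes {..<length as}. sign p * orient (map h (chain_of as p)) \<tau>) \<noteq> 0"
    using H as \<tau> by simp
  then obtain p where p: "p permutes {..<length as}" "sign p * orient (map h (chain_of as p)) \<tau> \<noteq> 0"
    using sum.not_neutral_contains_not_neutral by blast
  let ?ys = "permute_list p as"
  have "set (map h (chain_of as p)) = \<tau>" using p(2) by (auto simp: orient_def split: if_splits)
  moreover have "chain_of as p = pchain ?ys" using chain_pchain[OF p(1)] .
  moreover have "set ?ys = \<tau>" using p(1) as by (auto simp: set_permute_list)
  moreover have "?ys \<noteq> []" using as(3) by (metis length_permute_list length_0_conv)
  ultimately show ?thesis using pchain_last[of ?ys] by force
qed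


lemma comp_s_induced:
  "comp_s (induced g) as \<sigma> = (\<Sum>p | p permutes {..<length as}. sign p * orient (map g (chain_of as p)) \<sigma>)"
  by (simp add: comp_s_def induced_def)

lemma dual_term:
  "fst (dual_chain_map r g cs) * orient (snd (dual_chain_map r g cs)) \<sigma>
     = orient (map (\<lambda>\<tau>. rotinv r (g ({..<r} - \<tau>))) cs) \<sigma>"
proof -
  have "snd (dual_chain_map r g cs) = rev (map (\<lambda>\<tau>. rotinv r (g ({..<r} - \<tau>))) cs)"
    by (simp add: dual_chain_map_def rev_map)
  then show ?thesis
    by (simp add: dual_chain_map_def orient_rev mult.assoc[symmetric])
qed

lemma comp_s_dual:
  "comp_s (dual_chain_map r g) as \<sigma> =
   (\<Sum>p | p permutes {..<length as}. sign p * orient (map (\<lambda>\<tau>. rotinv r (g ({..<r} - \<tau>))) (chain_of as p)) \<sigma>)"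
  unfolding comp_s_def by (intro sum.cong refl) (simp add: mult.assoc dual_term)

lemma sorted_last: "sorted_wrt (\<subset>) cs \<Longrightarrow> c \<in> set cs \<Longrightarrow> c \<subseteq> last cs"
proof (induction cs)
  case Nil then show ?case by simp
next
  case (Cons x xs)
  show ?case
  proof (cases "xs = []")
    case True then show ?thesis using Cons by simp
  next
    case False
    then have "last xs \<in> set xs" by simp
    then show ?thesis using Cons False by auto
  qed
qed

lemma straightening_iff: "straightening r g \<longleftrightarrow> g \<in> extensional (bfaces r) \<and> (\<forall>\<tau>\<in>bfaces r. g \<tau> \<in> \<tau>)"
  by (auto simp: straightening_def PiE_iff)

lemma straightening_simplicial:
  assumes "straightening r g" shows "simplicial_map r g"
  unfolding simplicial_map_def
proof (intro conjI allI impI)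
  have g: "g \<in> extensional (bfaces r)" "\<forall>\<tau>\<in>bfaces r. g \<tau> \<in> \<tau>" using assms straightening_iff by auto
  have "\<forall>\<tau>\<in>bfaces r. g \<tau> \<in> {..<r}"
  proof
    fix \<tau> assume t: "\<tau> \<in> bfaces r"
    then have "\<tau> \<subseteq> {..<r}" by (simp add: bfaces_def)
    then show "g \<tau> \<in> {..<r}" using g(2) t by blast
  qed
  then show "g \<in> bfaces r \<rightarrow>\<^sub>E {..<r}" using g(1) by (simp add: PiE_iff)
  fix cs assume cs: "sd_simplex r cs"
  then have cs1: "cs \<noteq> []" "set cs \<subseteq> bfaces r" "sorted_wrt (\<subset>) cs" by (auto simp: sd_simplex_def)
  have lb: "last cs \<in> bfaces r" using cs1 by auto
  have sub: "g ` set cs \<subseteq> last cs" using g(2) cs1 sorted_last by blast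
  have ne: "g ` set cs \<noteq> {}" using cs1 by simp
  have lb2: "last cs \<subseteq> {..<r}" "last cs \<noteq> {..<r}" using lb by (auto simp: bfaces_def)
  have "g ` set cs \<subseteq> {..<r}" using sub lb2 by blast
  moreover have "g ` set cs \<noteq> {..<r}" using sub lb2 by blast
  ultimately show "g ` set cs \<in> bfaces r" using ne by (simp add: bfaces_def)
qed

lemma assemblage_iff: "assemblage r g \<longleftrightarrow> straightening r g"
proof
  assume A: "assemblage r g"
  have e: "g \<in> extensional (bfaces r)" using A by (auto simp: assemblage_def simplicial_map_def PiE_iff)
  have "\<forall>as. as \<noteq> [] \<and> distinct as \<and> set as \<in> bfaces r \<longrightarrow>
     (\<forall>\<sigma>. (\<Sum>p | p permutes {..<length as}. sign p * orient (map g (chain_of as p)) \<sigma>) = orient as \<sigma>)"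
    using A by (auto simp: assemblage_def splits_def comp_s_induced[symmetric])
  note HH = this
  have "\<forall>\<tau>\<in>bfaces r. g \<tau> \<in> \<tau>" using lemmaB[OF HH] by blast
  then show "straightening r g" using e straightening_iff by blast
next
  assume S: "straightening r g"
  have g: "\<forall>\<tau>\<in>bfaces r. g \<tau> \<in> \<tau>" using S straightening_iff by blast
  have "splits r (induced g)"
    unfolding splits_def
  proof (intro allI impI)
    fix as assume "as \<noteq> [] \<and> distinct as \<and> set as \<in> bfaces r"
    then show "comp_s (induced g) as = orient as"
      using lemmaA[OF g] by (auto simp: fun_eq_iff comp_s_induced)
  qed
  then show "assemblage r g" using straightening_simplicial[OF S] by (simp add: assemblage_def)
qed

lemma cyclic_iff: "cyclic_assemblage r g \<longleftrightarrow> cyclic_straightening r g"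
  by (simp add: cyclic_assemblage_def cyclic_straightening_def assemblage_iff)

lemma compl_bfaces: "\<tau> \<in> bfaces r \<Longrightarrow> {..<r} - \<tau> \<in> bfaces r \<and> {..<r} - ({..<r} - \<tau>) = \<tau>"
  by (auto simp: bfaces_def)

lemma rotinv_lt: "0 < r \<Longrightarrow> rotinv r x < r"
  by (simp add: rotinv_def)

lemma duality_iff:
  assumes r: "0 < r"
  shows "cyclic_assemblage_duality r g \<longleftrightarrow> cyclic_straightening_duality r g"
proof
  assume A: "cyclic_assemblage_duality r g"
  let ?h = "\<lambda>\<tau>. rotinv r (g ({..<r} - \<tau>))"
  have ca: "cyclic_assemblage r g" and sp: "splits r (dual_chain_map r g)"
    using A unfolding cyclic_assemblage_duality_def by blast+
  have cs: "cyclic_straightening r g" using ca cyclic_iff by blast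
  have "\<forall>as. as \<noteq> [] \<and> distinct as \<and> set as \<in> bfaces r \<longrightarrow>
     (\<forall>\<sigma>. (\<Sum>p | p permutes {..<length as}. sign p * orient (map ?h (chain_of as p)) \<sigma>) = orient as \<sigma>)"
  proof (intro allI impI)
    fix as \<sigma> assume v: "as \<noteq> [] \<and> distinct as \<and> set as \<in> bfaces r"
    then have "comp_s (dual_chain_map r g) as = orient as" using sp unfolding splits_def by blast
    then have "comp_s (dual_chain_map r g) as \<sigma> = orient as \<sigma>" by simp
    then show "(\<Sum>p | p permutes {..<length as}. sign p * orient (map ?h (chain_of as p)) \<sigma>) = orient as \<sigma>"
      unfolding comp_s_dual .
  qed
  note HH = this
  have H: "\<forall>\<tau>\<in>bfaces r. ?h \<tau> \<in> \<tau>" using lemmaB[OF HH] by blast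
  have "\<forall>\<sigma>\<in>bfaces r. rotinv r (g \<sigma>) \<notin> \<sigma>"
  proof
    fix \<sigma> assume s: "\<sigma> \<in> bfaces r"
    have c: "{..<r} - \<sigma> \<in> bfaces r" "{..<r} - ({..<r} - \<sigma>) = \<sigma>" using compl_bfaces[OF s] by auto
    have "?h ({..<r} - \<sigma>) \<in> {..<r} - \<sigma>" using H c(1) by (rule bspec)
    then show "rotinv r (g \<sigma>) \<notin> \<sigma>" unfolding c(2) by blast
  qed
  then show "cyclic_straightening_duality r g" using cs unfolding cyclic_straightening_duality_def by blast
next
  assume S: "cyclic_straightening_duality r g"
  let ?h = "\<lambda>\<tau>. rotinv r (g ({..<r} - \<tau>))"
  have cs: "cyclic_straightening r g" and D: "\<forall>\<tau>\<in>bfaces r. rotinv r (g \<tau>) \<notin> \<tau>"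
    using S unfolding cyclic_straightening_duality_def by blast+
  have H: "\<forall>\<tau>\<in>bfaces r. ?h \<tau> \<in> \<tau>"
  proof
    fix \<tau> assume t: "\<tau> \<in> bfaces r"
    have "?h \<tau> \<notin> {..<r} - \<tau>" using D compl_bfaces[OF t] by blast
    moreover have "?h \<tau> < r" using rotinv_lt[OF r] .
    ultimately show "?h \<tau> \<in> \<tau>" by blast
  qed
  have sp: "splits r (dual_chain_map r g)"
    unfolding splits_def
  proof (intro allI impI)
    fix as assume "as \<noteq> [] \<and> distinct as \<and> set as \<in> bfaces r"
    then show "comp_s (dual_chain_map r g) as = orient as"
      unfolding fun_eq_iff comp_s_dual using lemmaA[OF H] by blast
  qed
  have "dual_vertex_map r g = restrict ?h (bfaces r)" by (simp add: dual_vertex_map_def)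
  moreover have "straightening r (restrict ?h (bfaces r))"
    unfolding straightening_iff using H by simp
  ultimately have "simplicial_map r (dual_vertex_map r g)" using straightening_simplicial by metis
  moreover have "cyclic_assemblage r g" using cs cyclic_iff by blast
  ultimately show "cyclic_assemblage_duality r g"
    using sp unfolding cyclic_assemblage_duality_def by blast
qed

theorem lemma6p8:
  fixes r :: nat
  assumes "0 < r"
  shows "(\<exists>f. bij_betw f {g. assemblage r g} {x. straightening r x})
       \<and> (\<exists>f. bij_betw f {g. cyclic_assemblage r g} {x. cyclic_straightening r x})
       \<and> (\<exists>f. bij_betw f {g. cyclic_assemblage_duality r g} {x. cyclic_straightening_duality r x})"
proof -
  have e1: "{g. assemblage r g} = {x. straightening r x}" using assemblage_iff by blast
  have e2: "{g. cyclic_assemblage r g} = {x. cyclic_straightening r x}" using cyclic_iff by blast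
  have e3: "{g. cyclic_assemblage_duality r g} = {x. cyclic_straightening_duality r x}"
    using duality_iff[OF assms] by blast
  show ?thesis using e1 e2 e3 bij_betw_id by metis
qed

end
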